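(* Let $\mathcal{F}=(W,\preceq,\mathcal{V})$ be a finite poset model and $w_1,w_2\in W$. If $w_1\equiv_\gamma w_2$ then $w_1\equiv_\eta w_2$.
   Context: Fix a set PL of proposition letters. A poset model is $\mathcal{F}=(W,\preceq,\mathcal{V})$ with $(W,\preceq)$ a partial order and $\mathcal{V}:\mathrm{PL}\to\mathcal{P}(W)$. For $m,n\in\mathbb{N}$, $[m;n]=\{i: m\le i\le n\}$, $[m;n)=\{i:m\le i<n\}$, $(m;n)=\{i:m<i<n\}$. An undirected path of length $\ell$ from $w$ is $\pi:[0;\ell]\to W$ with $\pi(0)=w$ and, for each $i\in[0;\ell)$, $\pi(i)\preceq\pi(i+1)$ or $\pi(i+1)\preceq\pi(i)$. A $\pm$-path is an undirected path of length $\ell\ge2$ with $\pi(0)\preceq\pi(1)$ and $\pi(\ell)\preceq\pi(\ell-1)$. Formulas are built by $\Phi::=p\mid\neg\Phi\mid\Phi_1\wedge\Phi_2\mid M(\Phi_1,\Phi_2)$, $p\in\mathrm{PL}$, with $M=\eta$ in SLCS$_\eta$ and $M=\gamma$ in SLCS$_\gamma$. Semantics on $\mathcal{F}$: $w\models p$ iff $w\in\mathcal{V}(p)$; negation and conjunction as usual; $w\models\gamma(\Phi_1,\Phi_2)$ iff there is a $\pm$-path $\pi:[0;\ell]\to W$ from $w$ with $\pi(\ell)\models\Phi_2$ and $\pi(i)\models\Phi_1$ for all $i\in(0;\ell)$; $w\models\eta(\Phi_1,\Phi_2)$ iff there is a $\pm$-path $\pi:[0;\ell]\to W$ from $w$ with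 $\pi(\ell)\models\Phi_2$ and $\pi(i)\models\Phi_1$ for all $i\in[0;\ell)$. $w_1\equiv_\gamma w_2$ (resp. $\equiv_\eta$) means $w_1,w_2$ satisfy the same SLCS$_\gamma$ (resp. SLCS$_\eta$) formulas in $\mathcal{F}$. *)

theory Defs
  imports Main
begin

definition poset_model :: "'a set \<Rightarrow> ('a \<Rightarrow> 'a \<Rightarrow> bool) \<Rightarrow> ('p \<Rightarrow> 'a set) \<Rightarrow> bool" where
  "poset_model W le V \<longleftrightarrow>
     (\<forall>x\<in>W. le x x) \<and>
     (\<forall>x\<in>W. \<forall>y\<in>W. le x y \<and> le y x \<longrightarrow> x = y) \<and>
     (\<forall>x\<in>W. \<forall>y\<in>W. \<forall>z\<in>W. le x y \<and> le y z \<longrightarrow> le x z) \<and>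
     (\<forall>p. V p \<subseteq> W)"

definition undirected_path :: "'a set \<Rightarrow> ('a \<Rightarrow> 'a \<Rightarrow> bool) \<Rightarrow> (nat \<Rightarrow> 'a) \<Rightarrow> nat \<Rightarrow> bool" where
  "undirected_path W le \<pi> l \<longleftrightarrow>
     (\<forall>i\<le>l. \<pi> i \<in> W) \<and> (\<forall>i<l. le (\<pi> i) (\<pi> (Suc i)) \<or> le (\<pi> (Suc i)) (\<pi> i))"

definition pm_path :: "'a set \<Rightarrow> ('a \<Rightarrow> 'a \<Rightarrow> bool) \<Rightarrow> (nat \<Rightarrow> 'a) \<Rightarrow> nat \<Rightarrow> bool" where
  "pm_path W le \<pi> l \<longleftrightarrow>
     undirected_path W le \<pi> l \<and> 2 \<le> l \<and> le (\<pi> 0) (\<pi> 1) \<and> le (\<pi> l) (\<pi> (l - 1))"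

datatype 'p gform = GAtom 'p | GNot "'p gform" | GAnd "'p gform" "'p gform" | Gamma "'p gform" "'p gform"
datatype 'p eform = EAtom 'p | ENot "'p eform" | EAnd "'p eform" "'p eform" | Eta "'p eform" "'p eform"

fun sat_gamma :: "'a set \<Rightarrow> ('a \<Rightarrow> 'a \<Rightarrow> bool) \<Rightarrow> ('p \<Rightarrow> 'a set) \<Rightarrow> 'a \<Rightarrow> 'p gform \<Rightarrow> bool" where
  "sat_gamma W le V w (GAtom p) = (w \<in> V p)"
| "sat_gamma W le V w (GNot f) = (\<not> sat_gamma W le V w f)"
| "sat_gamma W le V w (GAnd f g) = (sat_gamma W le V w f \<and> sat_gamma W le V w g)"
| "sat_gamma W le V w (Gamma f g) =
     (\<exists>\<pi> l. pm_path W le \<pi> l \<and> \<pi> 0 = w \<and> sat_gamma W le V (\<pi> l) g \<and>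
            (\<forall>i. 0 < i \<and> i < l \<longrightarrow> sat_gamma W le V (\<pi> i) f))"

fun sat_eta :: "'a set \<Rightarrow> ('a \<Rightarrow> 'a \<Rightarrow> bool) \<Rightarrow> ('p \<Rightarrow> 'a set) \<Rightarrow> 'a \<Rightarrow> 'p eform \<Rightarrow> bool" where
  "sat_eta W le V w (EAtom p) = (w \<in> V p)"
| "sat_eta W le V w (ENot f) = (\<not> sat_eta W le V w f)"
| "sat_eta W le V w (EAnd f g) = (sat_eta W le V w f \<and> sat_eta W le V w g)"
| "sat_eta W le V w (Eta f g) =
     (\<exists>\<pi> l. pm_path W le \<pi> l \<and> \<pi> 0 = w \<and> sat_eta W le V (\<pi> l) g \<and>
            (\<forall>i. i < l \<longrightarrow> sat_eta W le V (\<pi> i) f))"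

definition gamma_equiv :: "'a set \<Rightarrow> ('a \<Rightarrow> 'a \<Rightarrow> bool) \<Rightarrow> ('p \<Rightarrow> 'a set) \<Rightarrow> 'a \<Rightarrow> 'a \<Rightarrow> bool" where
  "gamma_equiv W le V w1 w2 \<longleftrightarrow> (\<forall>f. sat_gamma W le V w1 f = sat_gamma W le V w2 f)"

definition eta_equiv :: "'a set \<Rightarrow> ('a \<Rightarrow> 'a \<Rightarrow> bool) \<Rightarrow> ('p \<Rightarrow> 'a set) \<Rightarrow> 'a \<Rightarrow> 'a \<Rightarrow> bool" where
  "eta_equiv W le V w1 w2 \<longleftrightarrow> (\<forall>f. sat_eta W le V w1 f = sat_eta W le V w2 f)"

end

theory Submission
  imports Defs
begin

fun tr :: "'p eform \<Rightarrow> 'p gform" where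
  "tr (EAtom p) = GAtom p"
| "tr (ENot f) = GNot (tr f)"
| "tr (EAnd f g) = GAnd (tr f) (tr g)"
| "tr (Eta f g) = GAnd (tr f) (Gamma (tr f) (tr g))"

lemma tr_sat: "sat_gamma W le V w (tr f) = sat_eta W le V w f"
proof (induction f arbitrary: w)
  case (Eta f g)
  show ?case
  proof
    assume "sat_gamma W le V w (tr (Eta f g))"
    then obtain \<pi> l where h: "sat_eta W le V w f" "pm_path W le \<pi> l" "\<pi> 0 = w"
      "sat_eta W le V (\<pi> l) g" "\<forall>i. 0 < i \<and> i < l \<longrightarrow> sat_eta W le V (\<pi> i) f"
      using Eta by auto
    have "\<forall>i. i < l \<longrightarrow> sat_eta W le V (\<pi> i) f"
      using h by (metis gr0I)
    then show "sat_eta W le V w (Eta f g)" using h by auto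
  next
    assume "sat_eta W le V w (Eta f g)"
    then obtain \<pi> l where h: "pm_path W le \<pi> l" "\<pi> 0 = w"
      "sat_eta W le V (\<pi> l) g" "\<forall>i. i < l \<longrightarrow> sat_eta W le V (\<pi> i) f"
      by auto
    have "0 < l" using h(1) unfolding pm_path_def by auto
    then have "sat_eta W le V w f" using h by metis
    then show "sat_gamma W le V w (tr (Eta f g))" using h Eta by auto
  qed
qed auto

theorem proposition3:
  fixes W :: "'a set" and le :: "'a \<Rightarrow> 'a \<Rightarrow> bool" and V :: "'p \<Rightarrow> 'a set"
  assumes "poset_model W le V" and "finite W"
    and "w1 \<in> W" and "w2 \<in> W"
    and "gamma_equiv W le V w1 w2"
  shows "eta_equiv W le V w1 w2"
  using assms(5) unfolding gamma_equiv_def eta_equiv_def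
  by (metis tr_sat)

end
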